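(* Let $X$ be any marked Dynkin diagram (not necessarily extensible) with $d$ nodes, and let $n\ge d$ be such that $\det(X_n)\ne0$. Then in $P(X_n)$, $$\overline{\omega}_i^{(n)}\equiv i\,\overline{\omega}_1^{(n)}\pmod{Q(X_n)}\quad\text{for }1\le i\le n-d+1.$$
   Context: A marked Dynkin diagram $X$ has nodes $1,\dots,d$ with node $d$ distinguished and symmetrizable generalized Cartan matrix $C(X)$. For $n\ge d$, $X_n$ is obtained by attaching a simply-laced chain of new nodes $d+1,\dots,n$ to node $d$ (so $C(X_n)$ has $C(X)$ as upper-left block, $2$ on the remaining diagonal, $-1$ in positions $(i,i+1),(i+1,i)$ for $d\le i<n$, $0$ elsewhere). $\det(X_n)$ is the determinant of $C(X_n)$. For the Kac–Moody algebra $\mathfrak g(X_n)$: simple roots $\alpha_i^{(n)}$, root lattice $Q(X_n)=\bigoplus\mathbb Z\alpha_i^{(n)}$, weight lattice $P(X_n)$, fundamental weights $\omega_i^{(n)}$, and $\overline{\omega}_i^{(n)}=\omega_{n-i+1}^{(n)}$. *)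

theory Defs
  imports Main "Jordan_Normal_Form.Determinant"
begin

text \<open>A marked Dynkin diagram X with d nodes is given by its generalized Cartan matrix
  X :: nat => nat => int, read on indices 1..d (node d is the marked node).
  Kac convention: X i j = <alpha_i^vee, alpha_j>.\<close>

definition sym_gcm :: "(nat \<Rightarrow> nat \<Rightarrow> int) \<Rightarrow> nat \<Rightarrow> bool" where
  "sym_gcm A m \<longleftrightarrow>
     (\<forall>i\<in>{1..m}. A i i = 2) \<and>
     (\<forall>i\<in>{1..m}. \<forall>j\<in>{1..m}. i \<noteq> j \<longrightarrow> A i j \<le> 0) \<and>
     (\<forall>i\<in>{1..m}. \<forall>j\<in>{1..m}. A i j = 0 \<longleftrightarrow> A j i = 0) \<and>
     (\<exists>D :: nat \<Rightarrow> rat. (\<forall>i\<in>{1..m}. D i > 0) \<and>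
        (\<forall>i\<in>{1..m}. \<forall>j\<in>{1..m}. D i * of_int (A i j) = D j * of_int (A j i)))"

text \<open>Cartan matrix of X_n: X as upper-left d x d block, a simply-laced chain d, d+1, ..., n.\<close>
definition cartanXn :: "(nat \<Rightarrow> nat \<Rightarrow> int) \<Rightarrow> nat \<Rightarrow> nat \<Rightarrow> nat \<Rightarrow> nat \<Rightarrow> int" where
  "cartanXn X d n i j =
     (if i \<le> d \<and> j \<le> d then X i j
      else if i = j then 2
      else if (d \<le> i \<and> j = i + 1) \<or> (d \<le> j \<and> i = j + 1) then -1
      else 0)"

text \<open>det(X_n) (matrix indices shifted to 0..n-1).\<close>
definition detXn :: "(nat \<Rightarrow> nat \<Rightarrow> int) \<Rightarrow> nat \<Rightarrow> nat \<Rightarrow> int" where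
  "detXn X d n = det (mat n n (\<lambda>(i, j). cartanXn X d n (i + 1) (j + 1)))"

text \<open>When det(X_n) is nonzero, the simple roots alpha_1..alpha_n form a basis of h^*.
  A weight is represented by its (rational) coordinates lambda k w.r.t. alpha_k (k = 1..n,
  zero elsewhere); the pairing with the coroot alpha_j^vee is sum_k a_jk lambda_k.\<close>
definition coroot_pair :: "(nat \<Rightarrow> nat \<Rightarrow> int) \<Rightarrow> nat \<Rightarrow> nat \<Rightarrow> nat \<Rightarrow> (nat \<Rightarrow> rat) \<Rightarrow> rat" where
  "coroot_pair X d n j w = (\<Sum>k=1..n. of_int (cartanXn X d n j k) * w k)"

definition is_weight_vec :: "nat \<Rightarrow> (nat \<Rightarrow> rat) \<Rightarrow> bool" where
  "is_weight_vec n w \<longleftrightarrow> (\<forall>k. k \<notin> {1..n} \<longrightarrow> w k = 0)"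

definition fund_weight :: "(nat \<Rightarrow> nat \<Rightarrow> int) \<Rightarrow> nat \<Rightarrow> nat \<Rightarrow> nat \<Rightarrow> (nat \<Rightarrow> rat)" where
  "fund_weight X d n i = (THE w. is_weight_vec n w \<and>
      (\<forall>j\<in>{1..n}. coroot_pair X d n j w = (if j = i then 1 else 0)))"

definition fund_weight_bar :: "(nat \<Rightarrow> nat \<Rightarrow> int) \<Rightarrow> nat \<Rightarrow> nat \<Rightarrow> nat \<Rightarrow> (nat \<Rightarrow> rat)" where
  "fund_weight_bar X d n i = fund_weight X d n (n - i + 1)"

definition in_root_lattice :: "nat \<Rightarrow> (nat \<Rightarrow> rat) \<Rightarrow> bool" where
  "in_root_lattice n w \<longleftrightarrow> is_weight_vec n w \<and> (\<forall>k. w k \<in> \<int>)"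

end

theory Submission
  imports Defs
begin

lemma inv_exists:
  assumes "detXn X d n \<noteq> 0"
  shows "\<exists>B::nat\<Rightarrow>nat\<Rightarrow>rat.
    (\<forall>i\<in>{1..n}. \<forall>j\<in>{1..n}. (\<Sum>k=1..n. of_int (cartanXn X d n i k) * B k j) = (if i = j then 1 else 0)) \<and>
    (\<forall>i\<in>{1..n}. \<forall>j\<in>{1..n}. (\<Sum>k=1..n. B i k * of_int (cartanXn X d n k j)) = (if i = j then 1 else 0))"
proof -
  let ?Ai = "mat n n (\<lambda>(i, j). cartanXn X d n (i + 1) (j + 1))"
  let ?A = "map_mat (of_int :: int \<Rightarrow> rat) ?Ai"
  have Ac: "?A \<in> carrier_mat n n" by simp
  have "det ?A = of_int (detXn X d n)" unfolding detXn_def by simp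
  with assms have "det ?A \<noteq> 0" by simp
  from det_non_zero_imp_unit[OF Ac this, of "()"]
  obtain M where M: "M \<in> carrier_mat n n" "M * ?A = 1\<^sub>m n" "?A * M = 1\<^sub>m n"
    unfolding Units_def ring_mat_def by auto
  define B where "B = (\<lambda>i j. M $$ (i - 1, j - 1))"
  have Aentry: "?A $$ (i - 1, j - 1) = of_int (cartanXn X d n i j)" if "i \<in> {1..n}" "j \<in> {1..n}" for i j
    using that by auto
  have sh: "(\<Sum>k=1..n. f k) = (\<Sum>k<n. f (k + 1))" for f :: "nat \<Rightarrow> rat"
    by (induction n) auto
  show ?thesis
  proof (intro exI conjI ballI)
    fix i j assume i: "i \<in> {1..n}" and j: "j \<in> {1..n}"
    have "(?A * M) $$ (i - 1, j - 1) = (\<Sum>k<n. ?A $$ (i - 1, k) * M $$ (k, j - 1))"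
      using i j M(1) by (auto simp: scalar_prod_def atLeast0LessThan intro!: sum.cong)
    also have "\<dots> = (\<Sum>k=1..n. of_int (cartanXn X d n i k) * B k j)"
      unfolding sh B_def using i j by (auto intro!: sum.cong)
    finally show "(\<Sum>k=1..n. of_int (cartanXn X d n i k) * B k j) = (if i = j then 1 else 0)"
      using M(3) i j by (auto simp: le_imp_diff_is_add)
  next
    fix i j assume i: "i \<in> {1..n}" and j: "j \<in> {1..n}"
    have "(M * ?A) $$ (i - 1, j - 1) = (\<Sum>k<n. M $$ (i - 1, k) * ?A $$ (k, j - 1))"
      using i j M(1) by (auto simp: scalar_prod_def atLeast0LessThan intro!: sum.cong)
    also have "\<dots> = (\<Sum>k=1..n. B i k * of_int (cartanXn X d n k j))"
      unfolding sh B_def using i j by (auto intro!: sum.cong)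
    finally show "(\<Sum>k=1..n. B i k * of_int (cartanXn X d n k j)) = (if i = j then 1 else 0)"
      using M(2) i j by (auto simp: le_imp_diff_is_add)
  qed
qed

lemma fw_eq:
  assumes AB: "\<forall>i\<in>{1..n}. \<forall>j\<in>{1..n}. (\<Sum>k=1..n. of_int (cartanXn X d n i k) * B k j) = (if i = j then 1 else 0)"
    and BA: "\<forall>i\<in>{1..n}. \<forall>j\<in>{1..n}. (\<Sum>k=1..n. B i k * of_int (cartanXn X d n k j)) = (if i = j then 1 else 0)"
    and i: "i \<in> {1..n}"
  shows "fund_weight X d n i = (\<lambda>k. if k \<in> {1..n} then B k i else 0)"
  unfolding fund_weight_def
proof (rule the_equality)
  show "is_weight_vec n (\<lambda>k. if k \<in> {1..n} then B k i else 0) \<and>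
    (\<forall>j\<in>{1..n}. coroot_pair X d n j (\<lambda>k. if k \<in> {1..n} then B k i else 0) = (if j = i then 1 else 0))"
    using AB i unfolding is_weight_vec_def coroot_pair_def
    by (auto intro: trans[OF sum.cong])
next
  fix w assume w: "is_weight_vec n w \<and> (\<forall>j\<in>{1..n}. coroot_pair X d n j w = (if j = i then 1 else 0))"
  show "w = (\<lambda>k. if k \<in> {1..n} then B k i else 0)"
  proof
    fix m
    show "w m = (if m \<in> {1..n} then B m i else 0)"
    proof (cases "m \<in> {1..n}")
      case False then show ?thesis using w unfolding is_weight_vec_def by auto
    next
      case m: True
      have "(\<Sum>j=1..n. (if m = j then 1 else 0) * w j) = (\<Sum>j=1..n. if m = j then w j else 0)"
        by (rule sum.cong) auto
      then have "w m = (\<Sum>j=1..n. (if m = j then 1 else 0) * w j)"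
        using m by simp
      also have "\<dots> = (\<Sum>j=1..n. (\<Sum>k=1..n. B m k * of_int (cartanXn X d n k j)) * w j)"
        using BA m by auto
      also have "\<dots> = (\<Sum>k=1..n. B m k * (\<Sum>j=1..n. of_int (cartanXn X d n k j) * w j))"
        by (simp add: sum_distrib_left sum_distrib_right mult.assoc) (rule sum.swap)
      also have "\<dots> = (\<Sum>k=1..n. B m k * (if k = i then 1 else 0))"
        using w by (auto simp: coroot_pair_def intro!: sum.cong)
      also have "\<dots> = (\<Sum>k=1..n. if k = i then B m k else 0)"
        by (rule sum.cong) auto
      also have "\<dots> = B m i" using i by simp
      finally show ?thesis using m by simp
    qed
  qed
qed

lemma col_sum:
  fixes f :: "nat \<Rightarrow> rat"
  assumes "1 \<le> d" "d < k" "k \<le> n"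
  shows "(\<Sum>j=1..n. of_int (cartanXn X d n j k) * f j) = 2 * f k - f (k - 1) - (if k < n then f (k + 1) else 0)"
proof -
  have h1: "(\<Sum>j=1..n. if j = k then 2 * f j else 0) = 2 * f k"
    using assms by (subst sum.delta) auto
  have h2: "(\<Sum>j=1..n. if j = k - 1 then - f j else 0) = - f (k - 1)"
    using assms by (subst sum.delta) auto
  have h3: "(\<Sum>j=1..n. if j = k + 1 then - f j else 0) = - (if k < n then f (k + 1) else 0)"
    using assms by (subst sum.delta) auto
  have "(\<Sum>j=1..n. of_int (cartanXn X d n j k) * f j) =
     (\<Sum>j=1..n. (if j = k then 2 * f j else 0) + (if j = k - 1 then - f j else 0) + (if j = k + 1 then - f j else 0))"
    using assms by (intro sum.cong) (auto simp: cartanXn_def)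
  also have "\<dots> = 2 * f k + - f (k - 1) + - (if k < n then f (k + 1) else 0)"
    by (simp only: sum.distrib h1 h2 h3)
  finally show ?thesis by simp
qed

theorem lemma3p8:
  fixes X :: "nat \<Rightarrow> nat \<Rightarrow> int" and d n i :: nat
  assumes "1 \<le> d" and "sym_gcm X d" and "d \<le> n" and "detXn X d n \<noteq> 0"
    and "1 \<le> i" and "i \<le> n - d + 1"
  shows "in_root_lattice n
           (\<lambda>k. fund_weight_bar X d n i k - of_nat i * fund_weight_bar X d n 1 k)"
proof -
  obtain B :: "nat \<Rightarrow> nat \<Rightarrow> rat" where AB: "\<forall>i\<in>{1..n}. \<forall>j\<in>{1..n}. (\<Sum>k=1..n. of_int (cartanXn X d n i k) * B k j) = (if i = j then 1 else 0)"
    and BA: "\<forall>i\<in>{1..n}. \<forall>j\<in>{1..n}. (\<Sum>k=1..n. B i k * of_int (cartanXn X d n k j)) = (if i = j then 1 else 0)"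
    using inv_exists[OF assms(4)] by blast
  note fw = fw_eq[OF AB BA]
  define g where "g = (\<lambda>i. if i = 0 then (\<lambda>m::nat. 0::rat) else fund_weight X d n (n - i + 1))"
  have rec: "g (i + 1) m = 2 * g i m - g (i - 1) m - (if m = n - i + 1 then 1 else 0)"
    if i: "1 \<le> i" "i \<le> n - d" and m: "m \<in> {1..n}" for i m
  proof -
    define k where "k = n - i + 1"
    have k: "d < k" "k \<le> n" using i assms(3) unfolding k_def by auto
    have "(\<Sum>j=1..n. of_int (cartanXn X d n j k) * fund_weight X d n j m) =
        (\<Sum>j=1..n. B m j * of_int (cartanXn X d n j k))"
      using m by (intro sum.cong) (auto simp: fw)
    also have "\<dots> = (if m = k then 1 else 0)" using BA m k assms(1) by auto
    finally have "2 * fund_weight X d n k m - fund_weight X d n (k - 1) m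
       - (if k < n then fund_weight X d n (k + 1) m else 0) = (if m = k then 1 else 0)"
      using col_sum[OF assms(1) k] by simp
    moreover have "fund_weight X d n k m = g i m" using i unfolding g_def k_def by auto
    moreover have "fund_weight X d n (k - 1) m = g (i + 1) m"
    proof -
      have "n - i = Suc (n - Suc i)" using i assms(1,3) by arith
      then show ?thesis using i unfolding g_def k_def by auto
    qed
    moreover have "(if k < n then fund_weight X d n (k + 1) m else 0) = g (i - 1) m"
    proof -
      have "Suc (Suc (n - i)) = Suc (Suc n - i)" using i assms(1,3) by arith
      then show ?thesis using i k unfolding g_def k_def by auto
    qed
    ultimately show ?thesis unfolding k_def by simp
  qed
  have int: "g i m - of_nat i * g 1 m \<in> \<int>" if "i \<le> n - d + 1" "m \<in> {1..n}" for i m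
    using that(1)
  proof (induction i rule: less_induct)
    case (less i)
    show ?case
    proof (cases "i \<le> 1")
      case True then show ?thesis by (cases i) (auto simp: g_def)
    next
      case False
      then obtain j where j: "i = j + 2" by (metis add_2_eq_Suc' le_add_diff_inverse2 nat_le_linear not_less_eq_eq numeral_2_eq_2 plus_1_eq_Suc)
      have r: "g (j + 1 + 1) m = 2 * g (j + 1) m - g j m - (if m = n - (j + 1) + 1 then 1 else 0)"
        using rec[of "j + 1" m] less.prems that(2) j by auto
      have i1: "g (j + 1) m - of_nat (j + 1) * g 1 m \<in> \<int>"
        by (rule less.IH) (use less.prems j in auto)
      have i0: "g j m - of_nat j * g 1 m \<in> \<int>"
        by (rule less.IH) (use less.prems j in auto)
      have eq: "g i m - of_nat i * g 1 m = 2 * (g (j + 1) m - of_nat (j + 1) * g 1 m)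
          - (g j m - of_nat j * g 1 m) - (if m = n - (j + 1) + 1 then 1 else 0)"
        using r j by (simp add: algebra_simps)
      have c: "(if m = n - (j + 1) + 1 then 1 else 0 :: rat) \<in> \<int>" by simp
      have two: "(2::rat) \<in> \<int>" by simp
      show ?thesis unfolding eq by (intro Ints_diff Ints_mult i1 i0 two c)
    qed
  qed
  show ?thesis unfolding in_root_lattice_def
  proof
    show "is_weight_vec n (\<lambda>k. fund_weight_bar X d n i k - of_nat i * fund_weight_bar X d n 1 k)"
      using assms unfolding is_weight_vec_def fund_weight_bar_def by (auto simp: fw)
  next
    show "\<forall>k. fund_weight_bar X d n i k - of_nat i * fund_weight_bar X d n 1 k \<in> \<int>"
    proof
      fix k
      show "fund_weight_bar X d n i k - of_nat i * fund_weight_bar X d n 1 k \<in> \<int>"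
      proof (cases "k \<in> {1..n}")
        case True
        have "fund_weight_bar X d n i k - of_nat i * fund_weight_bar X d n 1 k = g i k - of_nat i * g 1 k"
          using assms unfolding g_def fund_weight_bar_def by auto
        then show ?thesis using int[OF assms(6) True] by simp
      next
        case False
        then show ?thesis using assms unfolding fund_weight_bar_def by (auto simp: fw)
      qed
    qed
  qed
qed

end
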